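(* Let $\mathbf Y_i\in\mathbb R^k$ be a random vector whose law is absolutely continuous w.r.t. Lebesgue measure, has connected support and finite first moments, and let $(\alpha_0,\beta_0)$ be the population parameters (satisfying the subgradient conditions below). Let $\sigma>0$, $(\alpha,\beta)\in\mathbb R\times\mathbb R^{k-1}$, and let $b_i, W_i$ be as in the context. Then (b) $\sigma E\Big[\log\frac{f_{\boldsymbol\tau}(\mathbf Y_i\mid\alpha,\beta,\sigma)}{f_{\boldsymbol\tau}(\mathbf Y_i\mid\alpha_0,\beta_0,\sigma)}\Big]=E\big[-(W_i-b_i)1_{(b_i<W_i<0)}\big]+E\big[(W_i-b_i)1_{(0<W_i<b_i)}\big]$, and consequently (a) $E\Big[\log\frac{f_{\boldsymbol\tau}(\mathbf Y_i\mid\alpha,\beta,\sigma)}{f_{\boldsymbol\tau}(\mathbf Y_i\mid\alpha_0,\beta_0,\sigma)}\Big]\le 0$.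
   Context: Location case. Fix $\tau\in(0,1)$, $\mathbf u\in\mathcal S^{k-1}$, $\Gamma_{\mathbf u}$ a $k\times(k-1)$ matrix with $[\mathbf u\ \Gamma_{\mathbf u}]$ orthonormal, $\mathbf Y^\perp_{\mathbf u i}=\Gamma_{\mathbf u}'\mathbf Y_i$, $\rho_\tau(x)=x(\tau-1_{(x<0)})$, $f_{\boldsymbol\tau}(\mathbf Y\mid\alpha,\beta,\sigma)=\frac{\tau(1-\tau)}{\sigma}\exp\big(-\frac1\sigma\rho_\tau(\mathbf u'\mathbf Y-\alpha-\beta'\Gamma_{\mathbf u}'\mathbf Y)\big)$. $b_i=(\alpha-\alpha_0)+(\beta-\beta_0)'\mathbf Y^\perp_{\mathbf u i}$ and $W_i=(\mathbf u'-\beta_0'\Gamma_{\mathbf u}')\mathbf Y_i-\alpha_0$. The population parameters $(\alpha_0,\beta_0)$ satisfy $\Pr(W_i\le 0)=\tau$ and $E[\mathbf Y^\perp_{\mathbf u i}1_{(W_i\le0)}]=\tau E[\mathbf Y^\perp_{\mathbf u i}]$. *)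

theory Defs
  imports "HOL-Probability.Probability"
begin

definition rho :: "real \<Rightarrow> real \<Rightarrow> real" where
  "rho \<tau> x = x * (\<tau> - (if x < 0 then 1 else 0))"

text \<open>[u Gamma] is a k x k orthonormal matrix: u is a unit vector, the columns of Gamma
  (a k x (k-1) matrix, rows indexed by 'k, columns by 'm) are orthonormal and orthogonal to u,
  and CARD('k) = CARD('m) + 1.\<close>
definition orthonormal_completion :: "real^'k \<Rightarrow> real^'m^'k \<Rightarrow> bool" where
  "orthonormal_completion u \<Gamma> \<longleftrightarrow>
     CARD('k) = CARD('m) + 1 \<and> norm u = 1 \<and>
     transpose \<Gamma> ** \<Gamma> = mat 1 \<and> transpose \<Gamma> *v u = 0"

definition f_tau :: "real \<Rightarrow> real^'k \<Rightarrow> real^'m^'k \<Rightarrow> real^'k \<Rightarrow> real \<Rightarrow> real^'m \<Rightarrow> real \<Rightarrow> real" where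
  "f_tau \<tau> u \<Gamma> y \<alpha> \<beta> \<sigma> =
     \<tau> * (1 - \<tau>) / \<sigma> * exp (- (1 / \<sigma>) * rho \<tau> (u \<bullet> y - \<alpha> - \<beta> \<bullet> (transpose \<Gamma> *v y)))"

definition law_support :: "'a measure \<Rightarrow> ('a \<Rightarrow> 'b::metric_space) \<Rightarrow> 'b set" where
  "law_support M Y = {y. \<forall>e>0. measure M {x \<in> space M. Y x \<in> ball y e} > 0}"

end

theory Submission
  imports Defs
begin

lemma AE_hyper:
  fixes M :: "'a measure" and Y :: "'a \<Rightarrow> real^'k" and c :: "real^'k"
  assumes "Y \<in> borel_measurable M" "absolutely_continuous lborel (distr M lborel Y)" "c \<noteq> 0"
  shows "AE x in M. c \<bullet> Y x \<noteq> a"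
proof -
  let ?H = "{y::real^'k. c \<bullet> y = a}"
  have "negligible ?H" using negligible_hyperplane assms(3) by blast
  hence "?H \<in> null_sets lebesgue" using negligible_iff_null_sets by blast
  moreover have "?H \<in> sets lborel"
    by (simp add: borel_closed closed_hyperplane)
  ultimately have "?H \<in> null_sets lborel" using null_sets_completion_iff by blast
  hence "AE y in lborel. y \<notin> ?H" by (rule AE_not_in)
  hence "AE y in distr M lborel Y. y \<notin> ?H"
    using absolutely_continuous_AE[OF _ assms(2)] by simp
  hence "AE x in M. Y x \<notin> ?H"
    by (subst (asm) AE_distr_iff) (use assms(1) in \<open>auto simp: borel_closed closed_hyperplane\<close>)
  thus ?thesis by simp
qed

lemma lnratio:
  assumes "0 < \<tau>" "\<tau> < 1" "0 < \<sigma>"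
  shows "\<sigma> * ln (f_tau \<tau> u \<Gamma> y \<alpha> \<beta> \<sigma> / f_tau \<tau> u \<Gamma> y \<alpha>0 \<beta>0 \<sigma>)
    = rho \<tau> (u \<bullet> y - \<alpha>0 - \<beta>0 \<bullet> (transpose \<Gamma> *v y)) - rho \<tau> (u \<bullet> y - \<alpha> - \<beta> \<bullet> (transpose \<Gamma> *v y))"
proof -
  define C where "C = \<tau> * (1 - \<tau>) / \<sigma>"
  define p where "p = rho \<tau> (u \<bullet> y - \<alpha> - \<beta> \<bullet> (transpose \<Gamma> *v y))"
  define q where "q = rho \<tau> (u \<bullet> y - \<alpha>0 - \<beta>0 \<bullet> (transpose \<Gamma> *v y))"
  have C: "C > 0" using assms by (simp add: C_def)
  have "f_tau \<tau> u \<Gamma> y \<alpha> \<beta> \<sigma> / f_tau \<tau> u \<Gamma> y \<alpha>0 \<beta>0 \<sigma> = exp (- (1/\<sigma>) * p - (- (1/\<sigma>) * q))"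
    unfolding f_tau_def C_def[symmetric] p_def[symmetric] q_def[symmetric] using C
    by (simp add: exp_diff exp_minus field_simps)
  hence "\<sigma> * ln (f_tau \<tau> u \<Gamma> y \<alpha> \<beta> \<sigma> / f_tau \<tau> u \<Gamma> y \<alpha>0 \<beta>0 \<sigma>) = \<sigma> * (- (1/\<sigma>) * p - (- (1/\<sigma>) * q))"
    by simp
  also have "\<dots> = q - p" using assms by (simp add: field_simps)
  finally show ?thesis by (simp add: p_def q_def)
qed

lemma inner_tr: "(v::real^'m) \<bullet> (transpose (A::real^'m^'k) *v y) = (A *v v) \<bullet> y"
  by (metis dot_lmul_matrix inner_commute transpose_matrix_vector)


theorem lemma2:
  fixes M :: "'a measure" and Y :: "'a \<Rightarrow> real^'k"
    and u :: "real^'k" and \<Gamma> :: "real^'m^'k"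
    and \<tau> \<sigma> \<alpha> \<alpha>0 :: real and \<beta> \<beta>0 :: "real^'m"
  assumes "prob_space M"
    and "Y \<in> borel_measurable M"
    and "absolutely_continuous lborel (distr M lborel Y)"
    and "connected (law_support M Y)"
    and "integrable M (\<lambda>x. norm (Y x))"
    and "0 < \<tau>" and "\<tau> < 1"
    and "orthonormal_completion u \<Gamma>"
    and "measure M {x \<in> space M. (u \<bullet> Y x - \<beta>0 \<bullet> (transpose \<Gamma> *v Y x)) - \<alpha>0 \<le> 0} = \<tau>"
    and "integral\<^sup>L M (\<lambda>x. indicator {x \<in> space M. (u \<bullet> Y x - \<beta>0 \<bullet> (transpose \<Gamma> *v Y x)) - \<alpha>0 \<le> 0} x
                            *\<^sub>R (transpose \<Gamma> *v Y x))
         = \<tau> *\<^sub>R integral\<^sup>L M (\<lambda>x. transpose \<Gamma> *v Y x)"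
    and "0 < \<sigma>"
  defines "b \<equiv> \<lambda>x. (\<alpha> - \<alpha>0) + (\<beta> - \<beta>0) \<bullet> (transpose \<Gamma> *v Y x)"
    and "W \<equiv> \<lambda>x. (u \<bullet> Y x - \<beta>0 \<bullet> (transpose \<Gamma> *v Y x)) - \<alpha>0"
  shows "\<sigma> * integral\<^sup>L M (\<lambda>x. ln (f_tau \<tau> u \<Gamma> (Y x) \<alpha> \<beta> \<sigma> / f_tau \<tau> u \<Gamma> (Y x) \<alpha>0 \<beta>0 \<sigma>))
           = integral\<^sup>L M (\<lambda>x. if b x < W x \<and> W x < 0 then - (W x - b x) else 0)
             + integral\<^sup>L M (\<lambda>x. if 0 < W x \<and> W x < b x then W x - b x else 0)
       \<and> integral\<^sup>L M (\<lambda>x. ln (f_tau \<tau> u \<Gamma> (Y x) \<alpha> \<beta> \<sigma> / f_tau \<tau> u \<Gamma> (Y x) \<alpha>0 \<beta>0 \<sigma>)) \<le> 0"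
  proof -
  interpret P: prob_space M by (rule assms(1))
  have Yint: "integrable M Y" using assms(5) integrable_norm_iff[OF assms(2)] by blast
  define c where "c = u - \<Gamma> *v \<beta>0"
  define d where "d = \<Gamma> *v (\<beta> - \<beta>0)"
  have Wexp: "W x = c \<bullet> Y x - \<alpha>0" for x
    unfolding W_def c_def inner_tr by (simp add: inner_diff_left)
  have bexp: "b x = (\<alpha> - \<alpha>0) + d \<bullet> Y x" for x
    unfolding b_def d_def inner_tr by simp
  have intW: "integrable M W" unfolding Wexp using Yint assms(1)
    by (intro Bochner_Integration.integrable_diff integrable_inner_right) auto
  have intb: "integrable M b" unfolding bexp using Yint assms(1)
    by (intro Bochner_Integration.integrable_add integrable_inner_right) auto
  have mW: "W \<in> borel_measurable M" using intW by auto
  have mb: "b \<in> borel_measurable M" using intb by auto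
  have intZ: "integrable M (\<lambda>x. transpose \<Gamma> *v Y x)"
    using integrable_bounded_linear[OF matrix_vector_mul_bounded_linear Yint] by blast
  define S where "S = {x \<in> space M. W x \<le> 0}"
  have Ssets: "S \<in> sets M" unfolding S_def using mW by measurable
  have S_eq: "{x \<in> space M. (u \<bullet> Y x - \<beta>0 \<bullet> (transpose \<Gamma> *v Y x)) - \<alpha>0 \<le> 0} = S"
    unfolding S_def W_def ..
  have measS: "measure M S = \<tau>" using assms(9) S_eq by simp
  have intS: "integral\<^sup>L M (\<lambda>x. indicator S x *\<^sub>R (transpose \<Gamma> *v Y x))
      = \<tau> *\<^sub>R integral\<^sup>L M (\<lambda>x. transpose \<Gamma> *v Y x)" using assms(10) S_eq by simp
  have c0: "c \<noteq> 0"
  proof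
    assume "c = 0"
    hence u: "u = \<Gamma> *v \<beta>0" unfolding c_def by simp
    have "transpose \<Gamma> *v u = (transpose \<Gamma> ** \<Gamma>) *v \<beta>0" unfolding u by (simp add: matrix_vector_mul_assoc)
    hence "\<beta>0 = 0" using assms(8) unfolding orthonormal_completion_def by simp
    hence "u = 0" using u by simp
    thus False using assms(8) unfolding orthonormal_completion_def by simp
  qed
  have AEW: "AE x in M. W x \<noteq> 0"
    using AE_hyper[OF assms(2) assms(3) c0, of \<alpha>0] unfolding Wexp by simp
  define lr where "lr = (\<lambda>x. ln (f_tau \<tau> u \<Gamma> (Y x) \<alpha> \<beta> \<sigma> / f_tau \<tau> u \<Gamma> (Y x) \<alpha>0 \<beta>0 \<sigma>))"
  define h1 where "h1 = (\<lambda>x. if b x < W x \<and> W x < 0 then - (W x - b x) else 0)"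
  define h2 where "h2 = (\<lambda>x. if 0 < W x \<and> W x < b x then W x - b x else 0)"
  define e where "e = (\<lambda>x. if W x = 0 \<and> b x \<le> 0 then b x else 0)"
  define g where "g = (\<lambda>x. \<tau> * b x - indicator S x * b x)"
  have pw: "\<sigma> * lr x = g x + h1 x + h2 x + e x" if x: "x \<in> space M" for x
  proof -
    have arg: "u \<bullet> Y x - \<alpha> - \<beta> \<bullet> (transpose \<Gamma> *v Y x) = W x - b x"
      unfolding W_def b_def by (simp add: inner_diff_left algebra_simps)
    have "\<sigma> * lr x = rho \<tau> (W x) - rho \<tau> (W x - b x)"
      unfolding lr_def lnratio[OF assms(6,7,11)] arg by (simp add: W_def algebra_simps)
    also have "\<dots> = g x + h1 x + h2 x + e x"
      unfolding g_def h1_def h2_def e_def rho_def S_def using x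
      by (auto simp: indicator_def algebra_simps)
    finally show ?thesis .
  qed
  have ih1: "integrable M h1" unfolding h1_def
    by (rule Bochner_Integration.integrable_bound[where f="\<lambda>x. \<bar>W x\<bar> + \<bar>b x\<bar>"]) (use intW intb mW mb in auto)
  have ih2: "integrable M h2" unfolding h2_def
    by (rule Bochner_Integration.integrable_bound[where f="\<lambda>x. \<bar>W x\<bar> + \<bar>b x\<bar>"]) (use intW intb mW mb in auto)
  have ie: "integrable M e" unfolding e_def
    by (rule Bochner_Integration.integrable_bound[where f="\<lambda>x. \<bar>W x\<bar> + \<bar>b x\<bar>"]) (use intW intb mW mb in auto)
  have ig: "integrable M g" unfolding g_def
    using intb integrable_mult_indicator[OF Ssets intb] by auto
  have e0: "integral\<^sup>L M e = 0"
    by (rule integral_eq_zero_AE) (use AEW in \<open>auto simp: e_def\<close>)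
  have g0: "integral\<^sup>L M g = 0"
  proof -
    define Z where "Z = (\<lambda>x. transpose \<Gamma> *v Y x)"
    have iZ: "integrable M Z" using intZ unfolding Z_def .
    have iSZ: "integrable M (\<lambda>x. indicator S x *\<^sub>R Z x)"
      using integrable_mult_indicator[OF Ssets iZ] .
    have iS: "integrable M (\<lambda>x. (\<alpha> - \<alpha>0) * indicator S x)"
      using Ssets by (intro integrable_mult_right integrable_real_indicator) (auto simp: less_top[symmetric])
    have SS: "S \<inter> space M = S" unfolding S_def by auto
    have bS: "indicator S x * b x = (\<alpha> - \<alpha>0) * indicator S x + (\<beta> - \<beta>0) \<bullet> (indicator S x *\<^sub>R Z x)" for x
      unfolding b_def Z_def by (simp add: algebra_simps)
    have "integral\<^sup>L M (\<lambda>x. indicator S x * b x)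
        = integral\<^sup>L M (\<lambda>x. (\<alpha> - \<alpha>0) * indicator S x + (\<beta> - \<beta>0) \<bullet> (indicator S x *\<^sub>R Z x))"
      unfolding bS ..
    also have "\<dots> = integral\<^sup>L M (\<lambda>x. (\<alpha> - \<alpha>0) * indicator S x) + integral\<^sup>L M (\<lambda>x. (\<beta> - \<beta>0) \<bullet> (indicator S x *\<^sub>R Z x))"
      by (rule Bochner_Integration.integral_add[OF iS integrable_inner_right[OF iSZ]])
    also have "integral\<^sup>L M (\<lambda>x. (\<alpha> - \<alpha>0) * indicator S x) = (\<alpha> - \<alpha>0) * \<tau>"
      using measS SS by simp
    also have "integral\<^sup>L M (\<lambda>x. (\<beta> - \<beta>0) \<bullet> (indicator S x *\<^sub>R Z x)) = (\<beta> - \<beta>0) \<bullet> integral\<^sup>L M (\<lambda>x. indicator S x *\<^sub>R Z x)"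
      using iSZ by (rule integral_inner_right)
    also have "integral\<^sup>L M (\<lambda>x. indicator S x *\<^sub>R Z x) = \<tau> *\<^sub>R integral\<^sup>L M Z"
      using intS unfolding Z_def .
    finally have A1: "integral\<^sup>L M (\<lambda>x. indicator S x * b x) = (\<alpha> - \<alpha>0) * \<tau> + \<tau> * ((\<beta> - \<beta>0) \<bullet> integral\<^sup>L M Z)"
      by simp
    have "integral\<^sup>L M b = integral\<^sup>L M (\<lambda>x. (\<alpha> - \<alpha>0) + (\<beta> - \<beta>0) \<bullet> Z x)"
      unfolding b_def Z_def ..
    also have "\<dots> = (\<alpha> - \<alpha>0) + (\<beta> - \<beta>0) \<bullet> integral\<^sup>L M Z"
      using iZ by (subst Bochner_Integration.integral_add) (auto simp: P.prob_space)
    finally have A2: "integral\<^sup>L M b = (\<alpha> - \<alpha>0) + (\<beta> - \<beta>0) \<bullet> integral\<^sup>L M Z" .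
    have A: "integral\<^sup>L M (\<lambda>x. indicator S x * b x) = \<tau> * integral\<^sup>L M b"
      unfolding A1 A2 by (simp add: algebra_simps)
    have "integral\<^sup>L M g = \<tau> * integral\<^sup>L M b - integral\<^sup>L M (\<lambda>x. indicator S x * b x)"
      unfolding g_def
      by (subst Bochner_Integration.integral_diff) (use intb integrable_mult_indicator[OF Ssets intb] in auto)
    thus ?thesis using A by simp
  qed
  have main: "\<sigma> * integral\<^sup>L M lr = integral\<^sup>L M h1 + integral\<^sup>L M h2"
  proof -
    have "\<sigma> * integral\<^sup>L M lr = integral\<^sup>L M (\<lambda>x. \<sigma> * lr x)" by simp
    also have "\<dots> = integral\<^sup>L M (\<lambda>x. g x + h1 x + h2 x + e x)"
      by (rule Bochner_Integration.integral_cong[OF refl pw])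
    also have "\<dots> = integral\<^sup>L M g + integral\<^sup>L M h1 + integral\<^sup>L M h2 + integral\<^sup>L M e"
      using ig ih1 ih2 ie by simp
    finally show ?thesis using g0 e0 by simp
  qed
  have n1: "integral\<^sup>L M h1 \<le> 0"
    using integral_mono[OF ih1 integrable_zero[of M]] by (auto simp: h1_def)
  have n2: "integral\<^sup>L M h2 \<le> 0"
    using integral_mono[OF ih2 integrable_zero[of M]] by (auto simp: h2_def)
  have "integral\<^sup>L M lr \<le> 0"
  proof -
    have "\<sigma> * integral\<^sup>L M lr \<le> 0" using main n1 n2 by simp
    thus ?thesis using assms(11) by (simp add: mult_le_0_iff)
  qed
  thus ?thesis using main unfolding lr_def h1_def h2_def by simp
qed

end
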